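(* For GP-EI with BSPMI and any $t\in\mathbb{N}$, when $E^r(t)$ holds, $$r_t\le\big(c_\mu(t)+\phi(0)+2\beta_t^{1/2}\big)\sigma_{t-1}(\mathbf{x}_t)+c_\alpha\beta_t^{1/2}\sigma_{t-1}([\mathbf{x}^*]_t)+\frac{1}{t^2},$$ where $c_\mu(t)=\log^{1/2}\!\big(\frac{t-1+\sigma^2}{2\pi\phi^2(0)\sigma^2}\big)$ and $c_\alpha=1.328$.
   Context: Setting: $d\ge1$, $r>0$, $C\subseteq[0,r]^d$ compact; $k$ positive semidefinite kernel with $k(\mathbf{x},\mathbf{x}')\le1$, $k(\mathbf{x},\mathbf{x})=1$ on $C$. $f$ is a sample path of $GP(0,k)$, Lipschitz with constant $L\ge1/(rd)$ in $\ell_1$-norm; $\mathbf{x}^*\in\arg\min_Cf$. Observations $y_t=f(\mathbf{x}_t)+\epsilon_t$, $\epsilon_t$ i.i.d. $\mathcal{N}(0,\sigma^2)$, $\sigma>0$. Posterior $\mu_t(\mathbf{x})=\mathbf{k}_t(\mathbf{x})^T(\mathbf{K}_t+\sigma^2\mathbf{I})^{-1}\mathbf{y}_{1:t}$, $\sigma_t^2(\mathbf{x})=1-\mathbf{k}_t(\mathbf{x})^T(\mathbf{K}_t+\sigma^2\mathbf{I})^{-1}\mathbf{k}_t(\mathbf{x})$ ($\mathbf{K}_t=[k(\mathbf{x}_i,\mathbf{x}_j)]_{i,j\le t}$, $\mathbf{k}_t(\mathbf{x})=[k(\mathbf{x}_i,\mathbf{x})]_{i\le t}$). BSPMI incumbent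 $\xi_t^+=\mu_t^m=\min_{i\le t}\mu_t(\mathbf{x}_i)$. $EI_t(\mathbf{x})=(\xi_t^+-\mu_t(\mathbf{x}))\Phi(z_t(\mathbf{x}))+\sigma_t(\mathbf{x})\phi(z_t(\mathbf{x}))$, $z_t=(\xi_t^+-\mu_t)/\sigma_t$, $\phi,\Phi$ standard normal pdf/cdf; GP-EI picks $\mathbf{x}_t\in\arg\max_CEI_{t-1}$. $r_t=f(\mathbf{x}_t)-f(\mathbf{x}^* )$. Discretization: $\mathbb{C}_t\subseteq C$ finite, $|\mathbb{C}_t|=(Lrdt^2)^d$, $\|\mathbf{x}-[\mathbf{x}]_t\|_1\le1/(Lt^2)$ for all $\mathbf{x}\in C$, $[\mathbf{x}]_t$ a closest point of $\mathbb{C}_t$. With $\delta\in(0,1)$, $\pi_t=\pi^2t^2/6$, $\beta_t=2\log(8|\mathbb{C}_t|\pi_t/\delta)$. $E^r(t)$ is the event that $|f(\mathbf{x})-\mu_{t-1}(\mathbf{x})|\le\beta_t^{1/2}\sigma_{t-1}(\mathbf{x})$ holds for all $\mathbf{x}\in\mathbb{C}_t$, for $\mathbf{x}=\mathbf{x}_t$, and for $\mathbf{x}=\mathbf{x}_{t-1}$. *)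

theory Defs
  imports "HOL-Probability.Probability" "Jordan_Normal_Form.Gauss_Jordan_Elimination"
begin

definition Phi :: "real \<Rightarrow> real" where
  "Phi z = measure (density lborel std_normal_density) {..z}"

abbreviation phi :: "real \<Rightarrow> real" where
  "phi \<equiv> std_normal_density"

definition l1dist :: "'a::euclidean_space \<Rightarrow> 'a \<Rightarrow> real" where
  "l1dist x y = (\<Sum>i\<in>Basis. \<bar>(x - y) \<bullet> i\<bar>)"

text \<open>Points are x 1, ..., x t; observations y 1, ..., y t; noise variance s2 = sigma^2.\<close>

definition Kmat :: "('a \<Rightarrow> 'a \<Rightarrow> real) \<Rightarrow> (nat \<Rightarrow> 'a) \<Rightarrow> nat \<Rightarrow> real mat" where
  "Kmat k x t = mat t t (\<lambda>(i, j). k (x (Suc i)) (x (Suc j)))"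

definition kvec :: "('a \<Rightarrow> 'a \<Rightarrow> real) \<Rightarrow> (nat \<Rightarrow> 'a) \<Rightarrow> nat \<Rightarrow> 'a \<Rightarrow> real vec" where
  "kvec k x t z = vec t (\<lambda>i. k (x (Suc i)) z)"

definition yvec :: "(nat \<Rightarrow> real) \<Rightarrow> nat \<Rightarrow> real vec" where
  "yvec y t = vec t (\<lambda>i. y (Suc i))"

definition reg_inv :: "('a \<Rightarrow> 'a \<Rightarrow> real) \<Rightarrow> real \<Rightarrow> (nat \<Rightarrow> 'a) \<Rightarrow> nat \<Rightarrow> real mat" where
  "reg_inv k s2 x t = the (mat_inverse (Kmat k x t + s2 \<cdot>\<^sub>m 1\<^sub>m t))"

definition post_mean :: "('a \<Rightarrow> 'a \<Rightarrow> real) \<Rightarrow> real \<Rightarrow> (nat \<Rightarrow> 'a) \<Rightarrow> (nat \<Rightarrow> real) \<Rightarrow> nat \<Rightarrow> 'a \<Rightarrow> real" where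
  "post_mean k s2 x y t z = kvec k x t z \<bullet> (reg_inv k s2 x t *\<^sub>v yvec y t)"

definition post_var :: "('a \<Rightarrow> 'a \<Rightarrow> real) \<Rightarrow> real \<Rightarrow> (nat \<Rightarrow> 'a) \<Rightarrow> nat \<Rightarrow> 'a \<Rightarrow> real" where
  "post_var k s2 x t z = 1 - kvec k x t z \<bullet> (reg_inv k s2 x t *\<^sub>v kvec k x t z)"

definition post_sd :: "('a \<Rightarrow> 'a \<Rightarrow> real) \<Rightarrow> real \<Rightarrow> (nat \<Rightarrow> 'a) \<Rightarrow> nat \<Rightarrow> 'a \<Rightarrow> real" where
  "post_sd k s2 x t z = sqrt (post_var k s2 x t z)"

definition incumbent :: "('a \<Rightarrow> 'a \<Rightarrow> real) \<Rightarrow> real \<Rightarrow> (nat \<Rightarrow> 'a) \<Rightarrow> (nat \<Rightarrow> real) \<Rightarrow> nat \<Rightarrow> real" where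
  "incumbent k s2 x y t = Min ((\<lambda>i. post_mean k s2 x y t (x i)) ` {1..t})"

definition EI :: "('a \<Rightarrow> 'a \<Rightarrow> real) \<Rightarrow> real \<Rightarrow> (nat \<Rightarrow> 'a) \<Rightarrow> (nat \<Rightarrow> real) \<Rightarrow> nat \<Rightarrow> 'a \<Rightarrow> real" where
  "EI k s2 x y t z =
     (let xi = incumbent k s2 x y t; m = post_mean k s2 x y t z; s = post_sd k s2 x t z;
          u = (xi - m) / s
      in (xi - m) * Phi u + s * phi u)"

definition psd_kernel_on :: "'a set \<Rightarrow> ('a \<Rightarrow> 'a \<Rightarrow> real) \<Rightarrow> bool" where
  "psd_kernel_on C k \<longleftrightarrow> (\<forall>x y. x \<in> C \<longrightarrow> y \<in> C \<longrightarrow> k x y = k y x) \<and>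
     (\<forall>n (p :: nat \<Rightarrow> 'a) (a :: nat \<Rightarrow> real). (\<forall>i<n. p i \<in> C) \<longrightarrow>
        (\<Sum>i<n. \<Sum>j<n. a i * a j * k (p i) (p j)) \<ge> 0)"

end

theory Submission
  imports Defs "Jordan_Normal_Form.Determinant"
begin

lemma Phi_nonneg: "0 \<le> Phi z" by (simp add: Phi_def)

lemma Phi_le1: "Phi z \<le> 1"
proof -
  interpret D: prob_space "density lborel phi" using prob_space_normal_density[of 1 0] by simp
  show ?thesis unfolding Phi_def by (rule D.prob_le_1)
qed

lemma one_minus_Phi: "1 - Phi z = integral\<^sup>L lborel (\<lambda>x. phi x * indicator {z<..} x)"
proof -
  interpret D: prob_space "density lborel phi" using prob_space_normal_density[of 1 0] by simp
  have "1 - Phi z = measure (density lborel phi) (UNIV - {..z})"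
    unfolding Phi_def using D.prob_compl[of "{..z}"] by simp
  also have "UNIV - {..z} = {z<..}" by auto
  also have "measure (density lborel phi) {z<..} = integral\<^sup>L (density lborel phi) (indicator {z<..})"
    by simp
  also have "\<dots> = integral\<^sup>L lborel (\<lambda>x. phi x *\<^sub>R indicator {z<..} x)"
    by (rule integral_density) auto
  finally show ?thesis by simp
qed

lemma tail_bound: "z * (1 - Phi z) \<le> sqrt (2 / pi)"
proof (cases "z > 0")
  case False
  then have "z * (1 - Phi z) \<le> 0" using Phi_le1[of z] by (simp add: mult_nonpos_nonneg)
  then show ?thesis by (meson order_trans real_sqrt_ge_zero pi_gt_zero less_imp_le divide_nonneg_pos zero_le_numeral) 
next
  case True
  have int1: "integrable lborel (\<lambda>x. phi x * indicator {z<..} x)"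
    by (rule integrable_real_mult_indicator) auto
  have int2: "integrable lborel (\<lambda>x. phi x * \<bar>x\<bar>^(2*0+1))"
    by (rule integrable_std_normal_moment_abs)
  have "z * (1 - Phi z) = integral\<^sup>L lborel (\<lambda>x. z * (phi x * indicator {z<..} x))"
    by (simp add: one_minus_Phi)
  also have "\<dots> \<le> integral\<^sup>L lborel (\<lambda>x. phi x * \<bar>x\<bar>^(2*0+1))"
  proof (rule integral_mono)
    show "integrable lborel (\<lambda>x. z * (phi x * indicator {z<..} x))" using int1 by simp
    show "integrable lborel (\<lambda>x. phi x * \<bar>x\<bar>^(2*0+1))" by (rule int2)
    fix x :: real
    show "z * (phi x * indicator {z<..} x) \<le> phi x * \<bar>x\<bar>^(2*0+1)"
      using True by (auto simp: indicator_def mult.commute intro!: mult_right_mono)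
  qed
  also have "\<dots> = sqrt (2/pi)"
    using integral_std_normal_moment_abs_odd[of 0] by simp
  finally show ?thesis .
qed



lemma sum_Suc_split2:
  "(\<Sum>i<Suc n. \<Sum>j<Suc n. f i j) = (\<Sum>i<n. \<Sum>j<n. f i j) + (\<Sum>i<n. f i n) + (\<Sum>j<n. f n j) + f n n"
  by (simp add: sum.distrib add_ac)

lemma quadM:
  fixes k :: "'a \<Rightarrow> 'a \<Rightarrow> real"
  assumes v: "v \<in> carrier_vec n"
  shows "((Kmat k x n + s2 \<cdot>\<^sub>m 1\<^sub>m n) *\<^sub>v v) \<bullet> v =
     (\<Sum>i<n. \<Sum>j<n. v$i * v$j * k (x (Suc i)) (x (Suc j))) + s2 * (\<Sum>i<n. v$i * v$i)"
proof -
  have dv: "dim_vec v = n" using v by simp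
  have row: "((Kmat k x n + s2 \<cdot>\<^sub>m 1\<^sub>m n) *\<^sub>v v) $ i = (\<Sum>j<n. k (x (Suc i)) (x (Suc j)) * v$j) + s2 * v$i"
    if "i < n" for i
  proof -
    have "((Kmat k x n + s2 \<cdot>\<^sub>m 1\<^sub>m n) *\<^sub>v v) $ i = (\<Sum>j<n. (k (x (Suc i)) (x (Suc j)) + s2 * (if i = j then 1 else 0)) * v$j)"
      using that dv by (simp add: Kmat_def scalar_prod_def row_def atLeast0LessThan)
    also have "\<dots> = (\<Sum>j<n. k (x (Suc i)) (x (Suc j)) * v$j) + (\<Sum>j<n. s2 * (if i = j then 1 else 0) * v$j)"
      by (simp add: distrib_right sum.distrib)
    also have "(\<Sum>j<n. s2 * (if i = j then 1 else 0) * v$j) = s2 * v$i"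
      using that by (simp add: if_distrib if_distribR sum.delta cong: if_cong)
    finally show ?thesis .
  qed
  have "((Kmat k x n + s2 \<cdot>\<^sub>m 1\<^sub>m n) *\<^sub>v v) \<bullet> v = (\<Sum>i<n. ((Kmat k x n + s2 \<cdot>\<^sub>m 1\<^sub>m n) *\<^sub>v v) $ i * v$i)"
    using dv by (simp add: scalar_prod_def atLeast0LessThan)
  also have "\<dots> = (\<Sum>i<n. ((\<Sum>j<n. k (x (Suc i)) (x (Suc j)) * v$j) + s2 * v$i) * v$i)"
    by (intro sum.cong refl, subst row) auto
  also have "\<dots> = (\<Sum>i<n. \<Sum>j<n. v$i * v$j * k (x (Suc i)) (x (Suc j))) + s2 * (\<Sum>i<n. v$i * v$i)"
    by (simp add: distrib_left distrib_right sum.distrib sum_distrib_left sum_distrib_right mult_ac)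
  finally show ?thesis .
qed




lemma psd_form:
  assumes "psd_kernel_on C k" "\<forall>i<(n::nat). p i \<in> C"
  shows "(\<Sum>i<n. \<Sum>j<n. a i * a j * k (p i) (p j)) \<ge> (0::real)"
proof -
  from assms(1) have H: "\<forall>(n::nat) p a. (\<forall>i<n. p i \<in> C) \<longrightarrow> (\<Sum>i<n. \<Sum>j<n. a i * a j * k (p i) (p j)) \<ge> (0::real)"
    unfolding psd_kernel_on_def by (rule conjunct2)
  show ?thesis using H assms(2) by blast
qed

lemma psd_sym:
  assumes "psd_kernel_on C k" "u \<in> C" "w \<in> C"
  shows "k u w = k w u"
  using assms unfolding psd_kernel_on_def by auto

lemma psd_K:
  fixes k :: "'a \<Rightarrow> 'a \<Rightarrow> real"
  assumes psd: "psd_kernel_on C k" and xC: "\<forall>i. 1 \<le> i \<and> i \<le> n \<longrightarrow> x i \<in> C"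
  shows "(\<Sum>i<n. \<Sum>j<n. a i * a j * k (x (Suc i)) (x (Suc j))) \<ge> 0"
proof -
  have "\<forall>i<n. x (Suc i) \<in> C" using xC by auto
  then show ?thesis by (rule psd_form[OF psd])
qed

lemma k_bounds:
  fixes k :: "'a \<Rightarrow> 'a \<Rightarrow> real"
  assumes psd: "psd_kernel_on C k" and diag: "\<forall>u\<in>C. k u u = 1" and u: "u \<in> C" and w: "w \<in> C"
  shows "\<bar>k u w\<bar> \<le> 1"
proof -
  let ?p = "\<lambda>i::nat. if i = 0 then u else w"
  have pC: "\<forall>i<2. ?p i \<in> C" using u w by auto
  have sym: "k w u = k u w" using psd_sym[OF psd w u] .
  have "(\<Sum>i<2. \<Sum>j<2. (\<lambda>_. 1::real) i * (\<lambda>_. 1) j * k (?p i) (?p j)) \<ge> 0"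
    by (rule psd_form[OF psd pC])
  then have 1: "k u u + k u w + k w u + k w w \<ge> 0" by (simp add: numeral_2_eq_2)
  have "(\<Sum>i<2. \<Sum>j<2. (\<lambda>i. if i = 0 then 1 else -1::real) i * (\<lambda>i. if i = 0 then 1 else -1) j * k (?p i) (?p j)) \<ge> 0"
    by (rule psd_form[OF psd pC])
  then have 2: "k u u - k u w - k w u + k w w \<ge> 0" by (simp add: numeral_2_eq_2)
  show ?thesis using 1 2 sym diag u w by auto
qed

lemma bound_quad:
  fixes v :: "nat \<Rightarrow> real"
  assumes "\<And>i j. i < n \<Longrightarrow> j < n \<Longrightarrow> \<bar>K i j\<bar> \<le> 1"
  shows "(\<Sum>i<n. \<Sum>j<n. v i * v j * K i j) \<le> real n * (\<Sum>i<n. v i * v i)"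
proof -
  have t: "v i * v j * K i j \<le> (v i * v i + v j * v j) / 2" if "i < n" "j < n" for i j
  proof -
    have "v i * v j * K i j \<le> \<bar>v i * v j\<bar> * \<bar>K i j\<bar>" by (metis abs_ge_self abs_mult)
    also have "\<dots> \<le> \<bar>v i * v j\<bar>" using assms[OF that] by (simp add: mult_left_le)
    also have "\<dots> \<le> (v i * v i + v j * v j) / 2"
      using sum_squares_bound[of "\<bar>v i\<bar>" "\<bar>v j\<bar>"] by (simp add: abs_mult power2_eq_square)
    finally show ?thesis .
  qed
  have "(\<Sum>i<n. \<Sum>j<n. v i * v j * K i j) \<le> (\<Sum>i<n. \<Sum>j<n. (v i * v i + v j * v j) / 2)"
    by (intro sum_mono) (use t in auto)
  also have "\<dots> = real n * (\<Sum>i<n. v i * v i)"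
  proof -
    have "(\<Sum>i<n. \<Sum>j<n. (v i * v i + v j * v j) / 2) = (\<Sum>i<n. \<Sum>j<n. v i * v i / 2) + (\<Sum>i<n. \<Sum>j<n. v j * v j / 2)"
      by (simp add: sum.distrib add_divide_distrib)
    also have "(\<Sum>i<n. \<Sum>j<n. v j * v j / 2) = (\<Sum>j<n. \<Sum>i<n. v j * v j / 2)"
      by (rule sum.swap)
    finally show ?thesis by (simp add: sum_distrib_left)
  qed
  finally show ?thesis .
qed

lemma ext_psd:
  fixes k :: "'a \<Rightarrow> 'a \<Rightarrow> real" and v :: "nat \<Rightarrow> real"
  assumes psd: "psd_kernel_on C k" and diag: "\<forall>u\<in>C. k u u = 1"
    and xC: "\<forall>i. 1 \<le> i \<and> i \<le> n \<longrightarrow> x i \<in> C" and zC: "z \<in> C"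
  shows "l\<^sup>2 * (\<Sum>i<n. \<Sum>j<n. v i * v j * k (x (Suc i)) (x (Suc j)))
     - 2 * l * (\<Sum>i<n. v i * k (x (Suc i)) z) + 1 \<ge> 0"
proof -
  let ?p = "\<lambda>i. if i < n then x (Suc i) else z"
  let ?a = "\<lambda>i. if i < n then - l * v i else 1"
  have pC: "\<forall>i<Suc n. ?p i \<in> C" using xC zC by auto
  have "(\<Sum>i<Suc n. \<Sum>j<Suc n. ?a i * ?a j * k (?p i) (?p j)) \<ge> 0"
    by (rule psd_form[OF psd pC])
  also have "(\<Sum>i<Suc n. \<Sum>j<Suc n. ?a i * ?a j * k (?p i) (?p j)) =
     (\<Sum>i<n. \<Sum>j<n. ?a i * ?a j * k (?p i) (?p j)) + (\<Sum>i<n. ?a i * ?a n * k (?p i) (?p n))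
     + (\<Sum>j<n. ?a n * ?a j * k (?p n) (?p j)) + ?a n * ?a n * k (?p n) (?p n)"
    by (rule sum_Suc_split2)
  also have "(\<Sum>i<n. \<Sum>j<n. ?a i * ?a j * k (?p i) (?p j)) = l\<^sup>2 * (\<Sum>i<n. \<Sum>j<n. v i * v j * k (x (Suc i)) (x (Suc j)))"
    by (simp add: sum_distrib_left power2_eq_square mult_ac)
  also have "(\<Sum>i<n. ?a i * ?a n * k (?p i) (?p n)) = - l * (\<Sum>i<n. v i * k (x (Suc i)) z)"
    by (simp add: sum_distrib_left mult_ac)
  also have "(\<Sum>j<n. ?a n * ?a j * k (?p n) (?p j)) = - l * (\<Sum>i<n. v i * k (x (Suc i)) z)"
  proof -
    have "k z (x (Suc j)) = k (x (Suc j)) z" if "j < n" for j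
      using psd_sym[OF psd] zC xC that by simp
    then show ?thesis by (simp add: sum_distrib_left mult_ac)
  qed
  also have "?a n * ?a n * k (?p n) (?p n) = 1" using diag zC by simp
  finally show ?thesis by (simp add: algebra_simps)
qed

lemma q_alg:
  fixes A b q s2 :: real
  assumes A0: "A \<ge> 0" and An: "A \<le> N * b" and b0: "b \<ge> 0" and s2: "s2 > 0" and N: "N \<ge> 0"
    and qd: "q = A + s2 * b" and ext: "\<And>l. l\<^sup>2 * A - 2 * l * q + 1 \<ge> 0"
  shows "0 \<le> q \<and> q \<le> N / (N + s2)"
proof -
  have q0: "q \<ge> 0" using A0 b0 s2 qd by simp
  show ?thesis
  proof (cases "q = 0")
    case True then show ?thesis using N s2 by simp
  next
    case False
    then have qp: "q > 0" using q0 by simp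
    have Ap: "A > 0"
    proof (rule ccontr)
      assume "\<not> A > 0" then have "A = 0" using A0 by simp
      then show False using ext[of "1/q"] qp by simp
    qed
    have "(q/A)\<^sup>2 * A - 2 * (q/A) * q + 1 \<ge> 0" by (rule ext)
    then have "q\<^sup>2 / A - 2 * q\<^sup>2 / A + 1 \<ge> 0" using Ap by (simp add: power2_eq_square field_simps)
    then have "q\<^sup>2 \<le> A" using Ap by (simp add: field_simps)
    have "N * q = N * A + s2 * (N * b)" using qd by (simp add: algebra_simps)
    also have "\<dots> \<ge> N * A + s2 * A" using An s2 by simp
    finally have "N * q \<ge> A * (N + s2)" by (simp add: algebra_simps)
    moreover have "A * (N + s2) \<ge> q\<^sup>2 * (N + s2)" using \<open>q\<^sup>2 \<le> A\<close> N s2 by (simp add: mult_right_mono)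
    ultimately have "N * q \<ge> q * q * (N + s2)" by (simp add: power2_eq_square)
    then have "N \<ge> q * (N + s2)" using qp by (simp add: mult_le_cancel_left_pos mult.assoc)
    then show ?thesis using q0 N s2 by (simp add: field_simps)
  qed
qed




lemma post_var_bound:
  fixes k :: "'a \<Rightarrow> 'a \<Rightarrow> real"
  assumes psd: "psd_kernel_on C k" and diag: "\<forall>u\<in>C. k u u = 1" and s2: "s2 > 0"
    and xC: "\<forall>i. 1 \<le> i \<and> i \<le> n \<longrightarrow> x i \<in> C" and zC: "z \<in> C"
  shows "s2 / (real n + s2) \<le> post_var k s2 x n z \<and> post_var k s2 x n z \<le> 1"
proof -
  define M where "M = Kmat k x n + s2 \<cdot>\<^sub>m 1\<^sub>m n"
  have Mc: "M \<in> carrier_mat n n" unfolding M_def Kmat_def by simp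
  have quad: "(M *\<^sub>v v) \<bullet> v = (\<Sum>i<n. \<Sum>j<n. v$i * v$j * k (x (Suc i)) (x (Suc j))) + s2 * (\<Sum>i<n. v$i * v$i)"
    if "v \<in> carrier_vec n" for v
    unfolding M_def by (rule quadM[OF that])
  have Kpos: "(\<Sum>i<n. \<Sum>j<n. v$i * v$j * k (x (Suc i)) (x (Suc j))) \<ge> 0" for v :: "real vec"
    using psd_K[OF psd xC, of "\<lambda>i. v$i"] by simp
  have "\<exists>B. mat_inverse M = Some B"
  proof (cases "mat_inverse M")
    case None
    obtain v where v: "v \<in> carrier_vec n" "v \<noteq> 0\<^sub>v n" "M *\<^sub>v v = 0\<^sub>v n"
      using det_non_zero_imp_unit[OF Mc, where b="()"] mat_inverse(1)[OF Mc None, where b="()"]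
        det_0_iff_vec_prod_zero[OF Mc] by blast
    have "(M *\<^sub>v v) \<bullet> v = 0" using v by simp
    then have "s2 * (\<Sum>i<n. v$i * v$i) \<le> 0" using quad[OF v(1)] Kpos[of v] by linarith
    then have s0: "(\<Sum>i<n. v$i * v$i) \<le> 0" using s2 by (simp add: mult_le_0_iff)
    have "\<forall>i\<in>{..<n}. v$i * v$i = 0"
      using sum_nonneg_eq_0_iff[of "{..<n}" "\<lambda>i. v$i * v$i"] s0
      by (metis (no_types, lifting) finite_lessThan order_antisym_conv sum_nonneg zero_le_square)
    then have "v = 0\<^sub>v n" using v(1) by (intro eq_vecI) auto
    then show ?thesis using v(2) by simp
  qed simp
  then obtain B where B: "mat_inverse M = Some B" by blast
  from mat_inverse(2)[OF Mc B] have MB: "M * B = 1\<^sub>m n" and Bc: "B \<in> carrier_mat n n" by auto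
  have RB: "reg_inv k s2 x n = B" unfolding reg_inv_def using B M_def by simp
  define kv where "kv = kvec k x n z"
  have kvc: "kv \<in> carrier_vec n" unfolding kv_def kvec_def by simp
  define v where "v = B *\<^sub>v kv"
  have vc: "v \<in> carrier_vec n" unfolding v_def using Bc kvc by simp
  have Mv: "M *\<^sub>v v = kv"
  proof -
    have "M *\<^sub>v v = (M * B) *\<^sub>v kv" unfolding v_def using Mc Bc kvc by simp
    also have "\<dots> = kv" using MB kvc by simp
    finally show ?thesis .
  qed
  define q where "q = kv \<bullet> v"
  have pv: "post_var k s2 x n z = 1 - q" unfolding post_var_def q_def v_def kv_def RB by simp
  define A where "A = (\<Sum>i<n. \<Sum>j<n. v$i * v$j * k (x (Suc i)) (x (Suc j)))"
  define b where "b = (\<Sum>i<n. v$i * v$i)"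
  have qAb: "q = A + s2 * b" unfolding q_def A_def b_def using quad[OF vc] Mv by simp
  have qsum: "q = (\<Sum>i<n. v$i * k (x (Suc i)) z)"
    unfolding q_def scalar_prod_def kv_def kvec_def using vc by (simp add: atLeast0LessThan mult.commute)
  have A0: "A \<ge> 0" unfolding A_def by (rule Kpos)
  have b0: "b \<ge> 0" unfolding b_def by (simp add: sum_nonneg)
  have An: "A \<le> real n * b" unfolding A_def b_def
    by (rule bound_quad[of n "\<lambda>i j. k (x (Suc i)) (x (Suc j))" "\<lambda>i. v$i"])
       (use k_bounds[OF psd diag] xC in auto)
  have ext: "l\<^sup>2 * A - 2 * l * q + 1 \<ge> 0" for l
    unfolding A_def qsum by (rule ext_psd[OF psd diag xC zC])
  have "0 \<le> q \<and> q \<le> real n / (real n + s2)"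
    by (rule q_alg[OF A0 An b0 s2 _ qAb ext]) simp
  moreover have "1 - real n / (real n + s2) = s2 / (real n + s2)" using s2
    by (simp add: field_simps)
  ultimately show ?thesis unfolding pv by simp
qed




lemma phi_exp: "phi u = phi 0 * exp (- u\<^sup>2 / 2)"
  by (simp add: std_normal_density_def)

lemma phi0_pos: "phi 0 > 0"
  by (simp add: std_normal_density_def)

lemma phi_nonneg: "phi u \<ge> 0" by simp

lemma phi_le0: "phi u \<le> phi 0"
  using phi_exp[of u] phi0_pos by (simp add: mult_le_cancel_left1)

lemma phi0_sq: "(phi 0)\<^sup>2 = 1 / (2 * pi)"
  by (simp add: std_normal_density_def power_divide real_sqrt_pow2)

lemma tau_ge: "u * Phi u + phi u \<ge> u - sqrt (2 / pi)"
proof -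
  have a: "u * (1 - Phi u) \<le> sqrt (2 / pi)" by (rule tail_bound)
  have b: "0 \<le> phi u" by simp
  have c: "u * (1 - Phi u) = u - u * Phi u" by (simp add: algebra_simps)
  show ?thesis using a b c by linarith
qed

lemma tau_le: "u * Phi u + phi u \<le> max u 0 + phi 0"
proof -
  have "u * Phi u \<le> max u 0"
  proof (cases "u \<ge> 0")
    case True then show ?thesis using Phi_le1[of u] by (simp add: mult_left_le)
  next
    case False then show ?thesis using Phi_nonneg[of u] by (simp add: mult_nonpos_nonneg)
  qed
  then show ?thesis using phi_le0[of u] by simp
qed

lemma tau_neg: "u \<le> 0 \<Longrightarrow> u * Phi u + phi u \<le> phi u"
  using Phi_nonneg[of u] by (simp add: mult_nonpos_nonneg)

lemma exp_16_5: "exp (16/5::real) \<le> 48"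
proof -
  have "exp (16/5::real) = exp 1 ^ 3 * exp (1/5)"
    by (simp add: exp_of_nat_mult[symmetric] exp_add[symmetric])
  also have "\<dots> \<le> 3 ^ 3 * (1 + 1/5 + (1/5)\<^sup>2)"
    using exp_le exp_bound[of "1/5::real"]
    by (intro mult_mono power_mono) auto
  also have "\<dots> \<le> 48" by (simp add: power2_eq_square)
  finally show ?thesis .
qed




theorem mainTheorem6:
  fixes C :: "'a::euclidean_space set"
    and r L sigma delta :: real
    and k :: "'a \<Rightarrow> 'a \<Rightarrow> real"
    and f :: "'a \<Rightarrow> real"
    and x :: "nat \<Rightarrow> 'a" and y :: "nat \<Rightarrow> real"
    and xstar :: 'a
    and Cd :: "nat \<Rightarrow> 'a set" and proj :: "nat \<Rightarrow> 'a \<Rightarrow> 'a"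
    and t :: nat
  defines "d \<equiv> real DIM('a)"
  defines "mu \<equiv> post_mean k (sigma\<^sup>2) x y"
    and "sd \<equiv> post_sd k (sigma\<^sup>2) x"
    and "beta \<equiv> (\<lambda>s::nat. 2 * ln (8 * real (card (Cd s)) * (pi\<^sup>2 * (real s)\<^sup>2 / 6) / delta))"
  assumes r_pos: "r > 0"
    and C_compact: "compact C"
    and C_box: "\<forall>z\<in>C. \<forall>i\<in>Basis. 0 \<le> z \<bullet> i \<and> z \<bullet> i \<le> r"
    and k_psd: "psd_kernel_on C k"
    and k_le1: "\<forall>u\<in>C. \<forall>v\<in>C. k u v \<le> 1"
    and k_diag: "\<forall>u\<in>C. k u u = 1"
    and L_ge: "L \<ge> 1 / (r * d)"
    and f_lip: "\<forall>u\<in>C. \<forall>v\<in>C. \<bar>f u - f v\<bar> \<le> L * l1dist u v"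
    and xstar_min: "xstar \<in> C" "\<forall>z\<in>C. f xstar \<le> f z"
    and sigma_pos: "sigma > 0"
    and delta: "0 < delta" "delta < 1"
    and x_in_C: "\<forall>s\<ge>1. x s \<in> C"
    and x_EI: "\<forall>s\<ge>2. \<forall>z\<in>C. EI k (sigma\<^sup>2) x y (s - 1) z \<le> EI k (sigma\<^sup>2) x y (s - 1) (x s)"
    and Cd_fin: "\<forall>s\<ge>1. finite (Cd s) \<and> Cd s \<subseteq> C \<and> real (card (Cd s)) = (L * r * d * (real s)\<^sup>2) ^ DIM('a)"
    and proj_closest: "\<forall>s\<ge>1. \<forall>z\<in>C. proj s z \<in> Cd s \<and> (\<forall>w\<in>Cd s. l1dist z (proj s z) \<le> l1dist z w)"
    and proj_close: "\<forall>s\<ge>1. \<forall>z\<in>C. l1dist z (proj s z) \<le> 1 / (L * (real s)\<^sup>2)"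
    and t_ge: "t \<ge> 2"
    and Er: "\<forall>z \<in> Cd t \<union> {x t, x (t - 1)}.
               \<bar>f z - mu (t - 1) z\<bar> \<le> sqrt (beta t) * sd (t - 1) z"
  shows "f (x t) - f xstar \<le>
     (sqrt (ln ((real t - 1 + sigma\<^sup>2) / (2 * pi * (phi 0)\<^sup>2 * sigma\<^sup>2))) + phi 0 + 2 * sqrt (beta t))
        * sd (t - 1) (x t)
     + 1.328 * sqrt (beta t) * sd (t - 1) (proj t xstar) + 1 / (real t)\<^sup>2"
proof -
  define n where "n = t - 1"
  have n1: "n \<ge> 1" using t_ge by (simp add: n_def)
  have rn: "real t - 1 = real n" using t_ge by (simp add: n_def of_nat_diff)
  have s2p: "sigma\<^sup>2 > 0" using sigma_pos by simp
  have xC: "\<forall>i. 1 \<le> i \<and> i \<le> n \<longrightarrow> x i \<in> C" using x_in_C by auto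
  have xtC: "x t \<in> C" using x_in_C t_ge by simp
  define lb where "lb = sqrt (sigma\<^sup>2 / (real n + sigma\<^sup>2))"
  have lbp: "lb > 0" unfolding lb_def using s2p by (intro real_sqrt_gt_zero divide_pos_pos add_nonneg_pos) auto
  have sdb: "lb \<le> sd n z \<and> sd n z \<le> 1" if "z \<in> C" for z
  proof -
    have "sigma\<^sup>2 / (real n + sigma\<^sup>2) \<le> post_var k (sigma\<^sup>2) x n z \<and> post_var k (sigma\<^sup>2) x n z \<le> 1"
      by (rule post_var_bound[OF k_psd k_diag s2p xC that])
    then show ?thesis unfolding lb_def sd_def post_sd_def by (simp add: real_sqrt_le_mono)
  qed
  define xi where "xi = incumbent k (sigma\<^sup>2) x y n"
  have EIeq: "EI k (sigma\<^sup>2) x y n z = sd n z * ((xi - mu n z) / sd n z * Phi ((xi - mu n z) / sd n z)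
       + phi ((xi - mu n z) / sd n z))" if "z \<in> C" for z
  proof -
    have pos: "sd n z > 0" using sdb[OF that] lbp by linarith
    have h: "\<And>P Q. sd n z * ((xi - mu n z) / sd n z * P + Q) = (xi - mu n z) * P + sd n z * Q"
      using pos by (simp add: field_simps)
    show ?thesis unfolding h unfolding EI_def Let_def xi_def mu_def sd_def by simp
  qed
  have EIt: "EI k (sigma\<^sup>2) x y n z \<le> EI k (sigma\<^sup>2) x y n (x t)" if "z \<in> C" for z
    using x_EI t_ge that unfolding n_def by simp
  obtain i where i: "i \<in> {1..n}" "xi = mu n (x i)"
  proof -
    have "xi \<in> (\<lambda>i. post_mean k (sigma\<^sup>2) x y n (x i)) ` {1..n}"
      unfolding xi_def incumbent_def by (rule Min_in) (use n1 in auto)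
    then show ?thesis using that unfolding mu_def by blast
  qed
  have xiC: "x i \<in> C" using xC i(1) by auto
  have EIi: "EI k (sigma\<^sup>2) x y n (x i) = sd n (x i) * phi 0"
    using EIeq[OF xiC] i(2) by simp
  define s where "s = sd n (x t)"
  define mt where "mt = mu n (x t)"
  define p where "p = proj t xstar"
  have pCd: "p \<in> Cd t" using proj_closest t_ge xstar_min(1) unfolding p_def by auto
  have CdC: "Cd t \<subseteq> C" using Cd_fin t_ge by simp
  have pC: "p \<in> C" using pCd CdC by blast
  define sp where "sp = sd n p"
  define mp where "mp = mu n p"
  have s_b: "lb \<le> s" "s \<le> 1" using sdb[OF xtC] unfolding s_def by auto
  have sp_b: "lb \<le> sp" "sp \<le> 1" using sdb[OF pC] unfolding sp_def by auto
  have sp0: "s > 0" "sp > 0" using s_b sp_b lbp by auto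
  define Lg where "Lg = ln ((real n + sigma\<^sup>2) / sigma\<^sup>2)"
  have cmu_eq: "sqrt (ln ((real t - 1 + sigma\<^sup>2) / (2 * pi * (phi 0)\<^sup>2 * sigma\<^sup>2))) = sqrt Lg"
    unfolding Lg_def rn phi0_sq by simp
  have Lg0: "Lg \<ge> 0" unfolding Lg_def using s2p by simp
  have boundA: "mt - xi \<le> sqrt Lg * s"
  proof (cases "mt \<le> xi")
    case True then show ?thesis using Lg0 sp0 by (simp add: order_trans[OF _ mult_nonneg_nonneg])
  next
    case False
    define u where "u = (xi - mt) / s"
    have u0: "u < 0" unfolding u_def using False sp0 by (simp add: divide_neg_pos)
    have "lb * phi 0 \<le> sd n (x i) * phi 0"
      using sdb[OF xiC] phi0_pos by (simp add: mult_right_mono)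
    also have "\<dots> \<le> EI k (sigma\<^sup>2) x y n (x t)" using EIi EIt[OF xiC] by simp
    also have "\<dots> = s * (u * Phi u + phi u)" using EIeq[OF xtC] unfolding u_def s_def mt_def by simp
    also have "\<dots> \<le> s * phi u" using tau_neg[of u] u0 sp0 by (simp add: mult_left_mono)
    also have "\<dots> \<le> phi u" using s_b sp0 normal_density_nonneg[of 0 1 u] by (simp add: mult_left_le_one_le)
    also have "\<dots> = phi 0 * exp (- u\<^sup>2 / 2)" by (rule phi_exp)
    finally have "lb \<le> exp (- u\<^sup>2 / 2)" using phi0_pos by (simp add: mult.commute)
    then have "ln lb \<le> ln (exp (- u\<^sup>2 / 2))" using lbp by (subst ln_le_cancel_iff) auto
    then have "ln lb \<le> - u\<^sup>2 / 2" by simp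
    moreover have "ln lb = - Lg / 2"
      unfolding lb_def Lg_def using s2p
      by (simp add: ln_sqrt ln_div add_pos_nonneg)
    ultimately have "u\<^sup>2 \<le> Lg" by simp
    then have "(-u)\<^sup>2 \<le> Lg" by simp
    then have "-u \<le> sqrt Lg" by (rule real_le_rsqrt)
    moreover have "mt - xi = (-u) * s" unfolding u_def using sp0 by simp
    ultimately show ?thesis using mult_right_mono[of "-u" "sqrt Lg" s] sp0 by simp
  qed
  have boundB: "xi - mp \<le> EI k (sigma\<^sup>2) x y n p + sqrt (2 / pi) * sp"
  proof -
    define u where "u = (xi - mp) / sp"
    have "EI k (sigma\<^sup>2) x y n p = sp * (u * Phi u + phi u)"
      using EIeq[OF pC] unfolding u_def sp_def mp_def by simp
    also have "\<dots> \<ge> sp * (u - sqrt (2 / pi))" using tau_ge[of u] sp0 by (simp add: mult_left_mono)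
    finally have "sp * (u - sqrt (2 / pi)) \<le> EI k (sigma\<^sup>2) x y n p" .
    moreover have "sp * u = xi - mp" unfolding u_def using sp0 by simp
    ultimately show ?thesis by (simp add: algebra_simps)
  qed
  have boundC: "EI k (sigma\<^sup>2) x y n (x t) \<le> max (xi - mt) 0 + phi 0 * s"
  proof -
    define u where "u = (xi - mt) / s"
    have e: "EI k (sigma\<^sup>2) x y n (x t) = s * (u * Phi u + phi u)"
      using EIeq[OF xtC] unfolding u_def s_def mt_def by simp
    have le: "s * (u * Phi u + phi u) \<le> s * (max u 0 + phi 0)" using tau_le[of u] sp0 by (simp add: mult_left_mono)
    have eq: "s * max u 0 = max (xi - mt) 0"
    proof -
      have su: "s * u = xi - mt" unfolding u_def using sp0 by simp
      show ?thesis
      proof (cases "u \<le> 0")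
        case True
        then have "s * u \<le> 0" using sp0 by (simp add: mult_nonneg_nonpos)
        then show ?thesis using True su by simp
      next
        case False
        then have "s * u > 0" using sp0 by simp
        then show ?thesis using False su by simp
      qed
    qed
    show ?thesis using e le eq by (simp add: distrib_left mult.commute)
  qed
  have mdiff: "mt - mp \<le> (sqrt Lg + phi 0) * s + sqrt (2 / pi) * sp"
  proof -
    have "mt - mp = (mt - xi) + (xi - mp)" by simp
    also have "\<dots> \<le> (mt - xi) + max (xi - mt) 0 + phi 0 * s + sqrt (2 / pi) * sp"
      using boundB boundC EIt[OF pC] by simp
    also have "(mt - xi) + max (xi - mt) 0 = max (mt - xi) 0" by (simp add: max_def)
    also have "max (mt - xi) 0 \<le> sqrt Lg * s" using boundA Lg0 sp0 by simp
    finally show ?thesis by (simp add: algebra_simps)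
  qed
  have d1: "d \<ge> 1" unfolding d_def using DIM_positive[where 'a='a] by linarith
  have Lrd: "L * r * d \<ge> 1"
  proof -
    have "r * d > 0" using r_pos d1 by simp
    then have "L \<ge> 1 / (r * d)" using L_ge by simp
    then have "1 \<le> L * (r * d)" using \<open>r * d > 0\<close> by (simp add: divide_le_eq)
    then show ?thesis by (simp add: mult.assoc)
  qed
  have Lpos: "L > 0"
  proof -
    have "1 / (r * d) > 0" using r_pos d1 by simp
    then show ?thesis using L_ge by linarith
  qed
  have t2: "(real t)\<^sup>2 \<ge> 4"
  proof -
    have "real t \<ge> 2" using t_ge by simp
    then have "(real t)\<^sup>2 \<ge> 2\<^sup>2" by (rule power_mono) simp
    then show ?thesis by simp
  qed
  have card1: "real (card (Cd t)) \<ge> 1"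
  proof -
    have "L * r * d * (real t)\<^sup>2 \<ge> 1 * 1" using Lrd t2 by (intro mult_mono) auto
    then have "(L * r * d * (real t)\<^sup>2) ^ DIM('a) \<ge> 1" by (simp add: one_le_power)
    then show ?thesis using Cd_fin t_ge d_def by simp
  qed
  have pi2: "pi\<^sup>2 \<ge> 9"
  proof -
    have "pi \<ge> 3" using pi_gt3 by simp
    then have "pi\<^sup>2 \<ge> 3\<^sup>2" by (rule power_mono) simp
    then show ?thesis by simp
  qed
  have X48: "8 * real (card (Cd t)) * (pi\<^sup>2 * (real t)\<^sup>2 / 6) / delta \<ge> 48"
  proof -
    have "pi\<^sup>2 * (real t)\<^sup>2 / 6 \<ge> 9 * 4 / 6" using pi2 t2 by (intro divide_right_mono mult_mono) auto
    then have "8 * real (card (Cd t)) * (pi\<^sup>2 * (real t)\<^sup>2 / 6) \<ge> 8 * 1 * (9 * 4 / 6)"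
      using card1 by (intro mult_mono) auto
    then have A: "8 * real (card (Cd t)) * (pi\<^sup>2 * (real t)\<^sup>2 / 6) \<ge> 48" by simp
    have "8 * real (card (Cd t)) * (pi\<^sup>2 * (real t)\<^sup>2 / 6) / delta \<ge> 8 * real (card (Cd t)) * (pi\<^sup>2 * (real t)\<^sup>2 / 6)"
    proof -
      let ?Y = "8 * real (card (Cd t)) * (pi\<^sup>2 * (real t)\<^sup>2 / 6)"
      have "delta * ?Y \<le> 1 * ?Y" using delta A by (intro mult_right_mono) auto
      then show ?thesis using delta by (simp add: le_divide_eq)
    qed
    then show ?thesis using A by linarith
  qed
  have beta_ge: "beta t \<ge> 32/5"
  proof -
    have "ln (exp (16/5::real)) \<le> ln 48" using exp_16_5 by (subst ln_le_cancel_iff) auto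
    then have "ln 48 \<ge> (16/5::real)" by simp
    moreover have "ln (8 * real (card (Cd t)) * (pi\<^sup>2 * (real t)\<^sup>2 / 6) / delta) \<ge> ln 48"
      using X48 by simp
    ultimately show ?thesis unfolding beta_def by simp
  qed
  have cbound: "sqrt (2 / pi) \<le> 0.328 * sqrt (beta t)"
  proof -
    have "2 / pi \<le> 2 / 3" using pi_gt3 by (intro divide_left_mono) auto
    also have "\<dots> \<le> 0.328\<^sup>2 * beta t" using beta_ge by (simp add: power2_eq_square)
    finally have "sqrt (2 / pi) \<le> sqrt (0.328\<^sup>2 * beta t)" by (rule real_sqrt_le_mono)
    also have "\<dots> = 0.328 * sqrt (beta t)" by (simp add: real_sqrt_mult)
    finally show ?thesis .
  qed
  have Er_t: "f (x t) - mt \<le> sqrt (beta t) * s"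
  proof -
    have "\<bar>f (x t) - mu (t - 1) (x t)\<bar> \<le> sqrt (beta t) * sd (t - 1) (x t)" using Er by blast
    then show ?thesis unfolding mt_def s_def n_def by linarith
  qed
  have Er_p: "mp - f p \<le> sqrt (beta t) * sp"
  proof -
    have "\<bar>f p - mu (t - 1) p\<bar> \<le> sqrt (beta t) * sd (t - 1) p" using Er pCd by blast
    then show ?thesis unfolding mp_def sp_def n_def by linarith
  qed
  have lip: "f p - f xstar \<le> 1 / (real t)\<^sup>2"
  proof -
    have "\<bar>f p - f xstar\<bar> \<le> L * l1dist p xstar" using f_lip pC xstar_min(1) by blast
    also have "l1dist p xstar = l1dist xstar p" unfolding l1dist_def
      by (intro sum.cong refl) (metis abs_minus_commute inner_diff_left)
    also have "L * l1dist xstar p \<le> L * (1 / (L * (real t)\<^sup>2))"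
    proof -
      have "l1dist xstar p \<le> 1 / (L * (real t)\<^sup>2)" using proj_close t_ge xstar_min(1) unfolding p_def by simp
      then show ?thesis using Lpos by (rule mult_left_mono[OF _ less_imp_le])
    qed
    also have "\<dots> = 1 / (real t)\<^sup>2" using Lpos by simp
    finally show ?thesis by simp
  qed
  have sqb0: "sqrt (beta t) \<ge> 0" using beta_ge by simp
  have "f (x t) - f xstar = (f (x t) - mt) + (mt - mp) + (mp - f p) + (f p - f xstar)" by simp
  also have "\<dots> \<le> sqrt (beta t) * s + ((sqrt Lg + phi 0) * s + sqrt (2 / pi) * sp)
      + sqrt (beta t) * sp + 1 / (real t)\<^sup>2"
    using Er_t mdiff Er_p lip by linarith
  also have "\<dots> \<le> (sqrt Lg + phi 0 + 2 * sqrt (beta t)) * s + 1.328 * sqrt (beta t) * sp + 1 / (real t)\<^sup>2"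
  proof -
    have "sqrt (2 / pi) * sp \<le> 0.328 * sqrt (beta t) * sp" using cbound sp0 by (simp add: mult_right_mono)
    moreover have "0 \<le> sqrt (beta t) * s" using sqb0 sp0 by simp
    ultimately show ?thesis by (simp add: algebra_simps)
  qed
  finally show ?thesis unfolding cmu_eq s_def sp_def p_def n_def .
qed


end
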